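(* Let $C'\subseteq\{0,1\}^n$ be nonempty, $J\subseteq[n]$ with $|J|\leq n/2$, and let $Q\subseteq[n]$ be a $J$-discerning set, i.e. $d_{TV}(U(C')[Q],U_J(C')[Q])\geq 1/8$. If $X\sim U(C')$, then $H[X[Q\setminus J]\mid X[J]]\leq |Q\setminus J|-0.0005$.
   Context: $[n]=\{1,\dots,n\}$; for $x\in\{0,1\}^n$ and $J\subseteq[n]$, $x[J]=(x_j)_{j\in J}$. $U(C')$ is the uniform distribution on $C'$, $U(C')[Q]$ the distribution of $X[Q]$ for $X\sim U(C')$. $U_J(C')$ is obtained by drawing $x\sim U(C')$ and replacing $x[[n]\setminus J]$ by an independent uniformly random vector; $U_J(C')[Q]$ is its restriction to $Q$. $d_{TV}(p,q)=\frac12\sum_a|p(a)-q(a)|$. $H$ is Shannon entropy (base 2) and $H[X\mid Y]=\sum_y\Pr[Y=y]H[X\mid Y=y]$. *)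

theory Defs
  imports Complex_Main "HOL-Library.FuncSet"
begin

text \<open>Vectors x in {0,1}^n are functions nat => bool, with coordinates indexed by
[n] = {1..n}; coordinates outside [n] are fixed to False. The restriction x[J]
is the library function restrict x J (undefined outside J).\<close>

definition cube :: "nat \<Rightarrow> (nat \<Rightarrow> bool) set" where
  "cube n = {x. \<forall>i. i \<notin> {1..n} \<longrightarrow> \<not> x i}"

definition U_dist :: "(nat \<Rightarrow> bool) set \<Rightarrow> (nat \<Rightarrow> bool) \<Rightarrow> real" where
  "U_dist C y = (if y \<in> C then 1 / real (card C) else 0)"

text \<open>Probability mass function of U_J(C'): draw x from U(C'), keep x[J] and
replace the coordinates in [n] - J by independent uniform bits.\<close>
definition UJ_dist :: "nat \<Rightarrow> nat set \<Rightarrow> (nat \<Rightarrow> bool) set \<Rightarrow> (nat \<Rightarrow> bool) \<Rightarrow> real" where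
  "UJ_dist n J C y = (if y \<in> cube n then
      (\<Sum>x\<in>C. (if restrict x J = restrict y J then 1 else 0) / real (card C))
        * (1/2) ^ card ({1..n} - J)
     else 0)"

definition marg :: "nat \<Rightarrow> ((nat \<Rightarrow> bool) \<Rightarrow> real) \<Rightarrow> nat set \<Rightarrow> (nat \<Rightarrow> bool) \<Rightarrow> real" where
  "marg n p Q a = (\<Sum>y\<in>{y\<in>cube n. restrict y Q = a}. p y)"

definition d_TV :: "'a set \<Rightarrow> ('a \<Rightarrow> real) \<Rightarrow> ('a \<Rightarrow> real) \<Rightarrow> real" where
  "d_TV S p q = (1/2) * (\<Sum>a\<in>S. \<bar>p a - q a\<bar>)"

text \<open>Shannon entropy (base 2) of a distribution on a finite set S (0 log 0 = 0,
since ln 0 = 0 in Isabelle).\<close>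
definition entropy2 :: "'a set \<Rightarrow> ('a \<Rightarrow> real) \<Rightarrow> real" where
  "entropy2 S p = - (\<Sum>a\<in>S. p a * log 2 (p a))"

definition cond_entropy_U :: "(nat \<Rightarrow> bool) set \<Rightarrow> nat set \<Rightarrow> nat set \<Rightarrow> real" where
  "cond_entropy_U C Q' J =
     (\<Sum>b\<in>(\<lambda>x. restrict x J) ` C.
        (real (card {x\<in>C. restrict x J = b}) / real (card C)) *
        entropy2 ((\<lambda>x. restrict x Q') ` C)
          (\<lambda>a. real (card {x\<in>C. restrict x J = b \<and> restrict x Q' = a})
               / real (card {x\<in>C. restrict x J = b})))"

end

theory Submission
  imports Defs
begin
lemma restrict_eq_iff: "restrict y A = restrict z A \<longleftrightarrow> (\<forall>i\<in>A. y i = z i)"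
  by (auto simp: restrict_def fun_eq_iff)

lemma restrict_img:
  assumes "I \<subseteq> {1..n}"
  shows "(\<lambda>y. restrict y I) ` cube n = (I \<rightarrow>\<^sub>E (UNIV::bool set))"
proof
  show "(\<lambda>y. restrict y I) ` cube n \<subseteq> I \<rightarrow>\<^sub>E UNIV" by auto
next
  show "I \<rightarrow>\<^sub>E UNIV \<subseteq> (\<lambda>y. restrict y I) ` cube n"
  proof
    fix f assume f: "f \<in> I \<rightarrow>\<^sub>E (UNIV::bool set)"
    have "(\<lambda>i. i \<in> I \<and> f i) \<in> cube n" using assms by (auto simp: cube_def)
    moreover have "f = restrict (\<lambda>i. i \<in> I \<and> f i) I"
      using f by (auto simp: restrict_def PiE_def extensional_def)
    ultimately show "f \<in> (\<lambda>y. restrict y I) ` cube n" by blast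
  qed
qed

lemma card_PiE_bool: "finite I \<Longrightarrow> card (I \<rightarrow>\<^sub>E (UNIV::bool set)) = 2 ^ card I"
  by (simp add: card_PiE)

lemma finite_cube: "finite (cube n)"
proof -
  have "inj_on (\<lambda>y. restrict y {1..n}) (cube n)"
  proof (rule inj_onI)
    fix x y assume "x \<in> cube n" "y \<in> cube n" "restrict x {1..n} = restrict y {1..n}"
    then show "x = y" unfolding cube_def restrict_eq_iff by (auto simp: fun_eq_iff)
  qed
  moreover have "finite ((\<lambda>y. restrict y {1..n}) ` cube n)"
    by (subst restrict_img) (auto intro: finite_PiE)
  ultimately show ?thesis using finite_imageD by blast
qed



lemma count_lemma:
  assumes "x \<in> cube n" "z \<in> cube n" "Q \<subseteq> {1..n}" "J \<subseteq> {1..n}"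
  shows "card {y \<in> cube n. restrict y Q = restrict z Q \<and> restrict y J = restrict x J}
    = (if \<forall>i\<in>Q\<inter>J. x i = z i then 2 ^ card ({1..n} - (Q \<union> J)) else 0)"
proof (cases "\<forall>i\<in>Q\<inter>J. x i = z i")
  case False
  then obtain i where i: "i \<in> Q" "i \<in> J" "x i \<noteq> z i" by blast
  have E: "{y \<in> cube n. restrict y Q = restrict z Q \<and> restrict y J = restrict x J} = {}"
  proof (rule ccontr)
    assume "\<not> ?thesis"
    then obtain y where "restrict y Q = restrict z Q" "restrict y J = restrict x J" by blast
    then have "y i = z i" "y i = x i" using i unfolding restrict_eq_iff by auto
    then show False using i by simp
  qed
  show ?thesis unfolding E if_not_P[OF False] by simp
next
  case True
  define R where "R = {1..n} - (Q \<union> J)"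
  define S where "S = {y \<in> cube n. restrict y Q = restrict z Q \<and> restrict y J = restrict x J}"
  have eqS: "y \<in> S \<longleftrightarrow> y \<in> cube n \<and> (\<forall>i\<in>Q. y i = z i) \<and> (\<forall>i\<in>J. y i = x i)" for y
    unfolding S_def by (simp add: restrict_eq_iff)
  have "bij_betw (\<lambda>y. restrict y R) S (R \<rightarrow>\<^sub>E (UNIV::bool set))"
  proof (rule bij_betwI')
    fix y y' assume "y \<in> S" "y' \<in> S"
    show "(restrict y R = restrict y' R) = (y = y')"
    proof
      assume r: "restrict y R = restrict y' R"
      show "y = y'"
      proof
        fix i
        show "y i = y' i"
        proof (cases "i \<in> {1..n}")
          case False then show ?thesis using \<open>y \<in> S\<close> \<open>y' \<in> S\<close> by (auto simp: eqS cube_def)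
        next
          case True
          then consider "i \<in> Q" | "i \<in> J" | "i \<in> R" unfolding R_def by blast
          then show ?thesis
            by cases (use \<open>y \<in> S\<close> \<open>y' \<in> S\<close> r in \<open>auto simp: eqS restrict_eq_iff\<close>)
        qed
      qed
    qed simp
  next
    fix y assume "y \<in> S" then show "restrict y R \<in> R \<rightarrow>\<^sub>E UNIV" by auto
  next
    fix f assume f: "f \<in> R \<rightarrow>\<^sub>E (UNIV::bool set)"
    define y where "y = (\<lambda>i. if i \<in> Q then z i else if i \<in> J then x i else (i \<in> R \<and> f i))"
    have "y \<in> S" unfolding eqS
      using assms True unfolding y_def cube_def R_def by auto
    moreover have "f = restrict y R" using f unfolding y_def R_def
      by (auto simp: fun_eq_iff restrict_def PiE_def extensional_def)
    ultimately show "\<exists>y\<in>S. f = restrict y R" by blast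
  qed
  then have "card S = card (R \<rightarrow>\<^sub>E (UNIV::bool set))" by (rule bij_betw_same_card)
  also have "\<dots> = 2 ^ card R" by (rule card_PiE_bool) (simp add: R_def)
  finally show ?thesis using True by (simp add: S_def R_def)
qed

lemma tangent_ln:
  fixes p u s :: real
  assumes "0 < p" "0 < u" "0 < s"
  shows "p * ln u + p * ln s + p - s * u \<le> p * ln p"
proof -
  have "ln (s * u / p) \<le> s * u / p - 1" using assms by (intro ln_le_minus_one) simp
  also have "ln (s * u / p) = ln s + ln u - ln p" using assms by (simp add: ln_mult ln_div)
  finally have "p * (ln s + ln u - ln p) \<le> p * (s * u / p - 1)"
    using assms by (intro mult_left_mono) auto
  then show ?thesis using assms by (simp add: algebra_simps)
qed

lemma pointwise:
  fixes p u :: real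
  assumes "0 \<le> p" "0 < u"
  shows "p * ln u + (p - u) + (1/11) * \<bar>p - u\<bar> - (1/90) * u \<le> p * ln p"
proof (cases "p = 0")
  case True then show ?thesis using assms by simp
next
  case False
  hence p: "0 < p" using assms by simp
  have l1: "ln (10/11::real) \<le> 10/11 - 1" by (intro ln_le_minus_one) simp
  have l2: "ln (10/9::real) \<le> 10/9 - 1" by (intro ln_le_minus_one) simp
  have e1: "ln (11/10::real) = - ln (10/11)" by (simp add: ln_div)
  have e2: "ln (9/10::real) = - ln (10/9)" by (simp add: ln_div)
  have a1: "ln (11/10::real) \<ge> 1/11" using l1 e1 by simp
  have a2: "ln (9/10::real) \<ge> -1/9" using l2 e2 by simp
  have t1: "p * ln u + p * ln (11/10) + p - (11/10) * u \<le> p * ln p"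
    using tangent_ln[OF p assms(2), of "11/10"] by simp
  have t2: "p * ln u + p * ln (9/10) + p - (9/10) * u \<le> p * ln p"
    using tangent_ln[OF p assms(2), of "9/10"] by simp
  have m1: "p * (1/11) \<le> p * ln (11/10)" using a1 p by (intro mult_left_mono) auto
  have m2: "p * (-1/9) \<le> p * ln (9/10)" using a2 p by (intro mult_left_mono) auto
  show ?thesis
  proof (cases "p \<ge> u")
    case True
    hence ab: "\<bar>p - u\<bar> = p - u" by simp
    show ?thesis unfolding ab using t1 m1 assms by (simp add: field_simps)
  next
    case False
    hence ab: "\<bar>p - u\<bar> = u - p" by simp
    show ?thesis unfolding ab using t2 m2 assms False by (simp add: field_simps)
  qed
qed

lemma sum_form:
  fixes p :: "'a \<Rightarrow> real"
  assumes "finite A" "card A = N" "N > 0" "\<And>a. a \<in> A \<Longrightarrow> 0 \<le> p a" "sum p A = 1"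
  shows "- ln (real N) + (1/11) * (\<Sum>a\<in>A. \<bar>p a - 1 / real N\<bar>) - 1/90 \<le> (\<Sum>a\<in>A. p a * ln (p a))"
proof -
  define u where "u = 1 / real N"
  have u: "u > 0" using assms by (simp add: u_def)
  have "(\<Sum>a\<in>A. p a * ln u + (p a - u) + (1/11) * \<bar>p a - u\<bar> - (1/90) * u) \<le> (\<Sum>a\<in>A. p a * ln (p a))"
    by (intro sum_mono pointwise assms u)
  also have "(\<Sum>a\<in>A. p a * ln u + (p a - u) + (1/11) * \<bar>p a - u\<bar> - (1/90) * u)
      = ln u * sum p A + (sum p A - real N * u) + (1/11) * (\<Sum>a\<in>A. \<bar>p a - u\<bar>) - (1/90) * (real N * u)"
    using assms by (simp add: sum.distrib sum_subtractf sum_distrib_left[symmetric] mult.commute sum_divide_distrib)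
  finally show ?thesis using assms by (simp add: u_def ln_div)
qed

lemma card_filter_sum: "finite A \<Longrightarrow> real (card {x\<in>A. P x}) = (\<Sum>x\<in>A. if P x then 1 else 0)"
  by (simp add: sum.inter_filter[symmetric])

lemma restrict_eq_ext: "c \<in> extensional Q \<Longrightarrow> restrict x Q = c \<longleftrightarrow> (\<forall>i\<in>Q. x i = c i)"
  by (auto simp: extensional_def restrict_def fun_eq_iff)



theorem lemma10:
  fixes n :: nat and C :: "(nat \<Rightarrow> bool) set" and J Q :: "nat set"
  assumes "C \<subseteq> cube n" and "C \<noteq> {}"
    and "J \<subseteq> {1..n}" and "real (card J) \<le> real n / 2"
    and "Q \<subseteq> {1..n}"
    and "d_TV ((\<lambda>y. restrict y Q) ` cube n)
           (marg n (U_dist C) Q) (marg n (UJ_dist n J C) Q) \<ge> 1/8"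
  shows "cond_entropy_U C (Q - J) J \<le> real (card (Q - J)) - 0.0005"
proof -
  note Csub = assms(1)
  define K where "K = Q - J"
  define k where "k = card K"
  define u :: real where "u = 1 / 2 ^ k"
  define AK where "AK = (K \<rightarrow>\<^sub>E (UNIV::bool set))"
  define AQ where "AQ = (Q \<rightarrow>\<^sub>E (UNIV::bool set))"
  define B where "B = (\<lambda>x. restrict x J) ` C"
  define T where "T = (\<lambda>x. restrict x K) ` C"
  define cb where "cb b = card {x\<in>C. restrict x J = b}" for b
  define cnt where "cnt b a = card {x\<in>C. restrict x J = b \<and> restrict x K = a}" for b a
  define pb where "pb b a = real (cnt b a) / real (cb b)" for b a
  define s where "s b = (\<Sum>a\<in>AK. \<bar>pb b a - u\<bar>)" for b
  have finC: "finite C" using Csub finite_cube finite_subset by blast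
  have cardC: "card C > 0" using finC assms(2) by (simp add: card_gt_0_iff)
  have finB: "finite B" using finC by (simp add: B_def)
  have finK: "finite K" using assms(5) K_def finite_subset by auto
  have Ksub: "K \<subseteq> {1..n}" using assms(5) K_def by auto
  have finAK: "finite AK" using finK by (simp add: AK_def finite_PiE)
  have cardAK: "card AK = 2 ^ k" using finK by (simp add: AK_def k_def card_PiE_bool)
  have imgAK: "(\<lambda>y. restrict y K) ` cube n = AK" using Ksub by (simp add: AK_def restrict_img)
  have imgAQ: "(\<lambda>y. restrict y Q) ` cube n = AQ" using assms(5) by (simp add: AQ_def restrict_img)
  have cbpos: "b \<in> B \<Longrightarrow> cb b > 0" for b
    using finC by (auto simp: B_def cb_def card_gt_0_iff)
  have sum_cb: "(\<Sum>b\<in>B. real (cb b)) = real (card C)"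
  proof -
    have "(\<Sum>b\<in>B. \<Sum>x\<in>{x. x\<in>C \<and> restrict x J = b}. (1::real)) = (\<Sum>x\<in>C. 1)"
      by (rule sum.group) (auto simp: B_def finC finB)
    then show ?thesis by (simp add: cb_def)
  qed
  have sum_cnt: "(\<Sum>a\<in>AK. real (cnt b a)) = real (cb b)" for b
  proof -
    have "(\<Sum>a\<in>AK. \<Sum>x\<in>{x. x\<in>{x\<in>C. restrict x J = b} \<and> restrict x K = a}. (1::real))
        = (\<Sum>x\<in>{x\<in>C. restrict x J = b}. 1)"
      by (rule sum.group) (use finC finAK imgAK Csub in auto)
    then show ?thesis by (simp add: cnt_def cb_def conj_assoc)
  qed
  have ent: "entropy2 T (pb b) \<le> real k - ((1/11) * s b - 1/90) / ln 2" if bB: "b \<in> B" for b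
  proof -
    have TAK: "T \<subseteq> AK" using imgAK Csub unfolding T_def by auto
    have "(\<Sum>a\<in>T. pb b a * log 2 (pb b a)) = (\<Sum>a\<in>AK. pb b a * log 2 (pb b a))"
    proof (rule sum.mono_neutral_left[OF finAK TAK], intro ballI)
      fix a assume a: "a \<in> AK - T"
      have E: "{x\<in>C. restrict x J = b \<and> restrict x K = a} = {}" using a unfolding T_def by auto
      show "pb b a * log 2 (pb b a) = 0" unfolding pb_def cnt_def E by simp
    qed
    also have "\<dots> = (\<Sum>a\<in>AK. pb b a * ln (pb b a)) / ln 2"
      by (simp add: log_def sum_divide_distrib)
    finally have e: "entropy2 T (pb b) = - (\<Sum>a\<in>AK. pb b a * ln (pb b a)) / ln 2"
      by (simp add: entropy2_def)
    have cbp: "real (cb b) > 0" using cbpos[OF bB] by simp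
    have sum1: "sum (pb b) AK = 1"
      using sum_cnt[of b] cbp by (simp add: pb_def sum_divide_distrib[symmetric])
    have sf: "- ln (real (2^k)) + (1/11) * (\<Sum>a\<in>AK. \<bar>pb b a - 1 / real (2^k)\<bar>) - 1/90
        \<le> (\<Sum>a\<in>AK. pb b a * ln (pb b a))"
      using sum1 by (intro sum_form[OF finAK cardAK]) (auto simp: pb_def)
    have "- ln (real (2^k)) + (1/11) * (\<Sum>a\<in>AK. \<bar>pb b a - 1 / real (2^k)\<bar>) - 1/90
        = - real k * ln 2 + (1/11) * s b - 1/90"
      by (simp add: s_def u_def ln_realpow)
    with sf have "- real k * ln 2 + (1/11) * s b - 1/90 \<le> (\<Sum>a\<in>AK. pb b a * ln (pb b a))" by simp
    then have "- (\<Sum>a\<in>AK. pb b a * ln (pb b a)) / ln 2 \<le> (real k * ln 2 - ((1/11) * s b - 1/90)) / ln 2"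
      by (intro divide_right_mono) auto
    also have "\<dots> = real k - ((1/11) * s b - 1/90) / ln 2"
      by (simp add: diff_divide_distrib)
    finally show ?thesis using e by simp
  qed
  define m where "m = card ({1..n} - J)"
  define R where "R = {1..n} - (Q \<union> J)"
  have mRk: "m = card R + k"
  proof -
    have "{1..n} - J = R \<union> K" "R \<inter> K = {}" using Ksub by (auto simp: R_def K_def)
    moreover have "finite R" by (simp add: R_def)
    ultimately show ?thesis using finK by (simp add: m_def k_def card_Un_disjoint)
  qed
  have Pc: "marg n (U_dist C) Q c = (\<Sum>x\<in>C. if restrict x Q = c then 1 else 0) / real (card C)" for c
  proof -
    have fY: "finite {y\<in>cube n. restrict y Q = c}" using finite_cube by simp
    have "marg n (U_dist C) Q c = (\<Sum>y\<in>{y\<in>{y\<in>cube n. restrict y Q = c}. y \<in> C}. 1 / real (card C))"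
      unfolding marg_def U_dist_def by (rule sum.inter_filter[OF fY, symmetric])
    also have "{y\<in>{y\<in>cube n. restrict y Q = c}. y \<in> C} = {x\<in>C. restrict x Q = c}" using Csub by auto
    finally show ?thesis using card_filter_sum[OF finC, of "\<lambda>x. restrict x Q = c"] by simp
  qed
  have P'c: "marg n (UJ_dist n J C) Q c = (\<Sum>x\<in>C. if (\<forall>i\<in>Q\<inter>J. x i = c i) then u else 0) / real (card C)"
    if cAQ: "c \<in> AQ" for c
  proof -
    obtain z where z: "z \<in> cube n" "c = restrict z Q" using cAQ imgAQ by blast
    define Y where "Y = {y\<in>cube n. restrict y Q = c}"
    define w where "w = (1/2::real)^m / real (card C)"
    have fY: "finite Y" using finite_cube by (simp add: Y_def)
    have "marg n (UJ_dist n J C) Q c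
        = (\<Sum>y\<in>Y. \<Sum>x\<in>C. (if restrict x J = restrict y J then 1 else 0) * w)"
      unfolding marg_def Y_def[symmetric]
      by (intro sum.cong) (auto simp: UJ_dist_def Y_def sum_distrib_right m_def w_def)
    also have "\<dots> = (\<Sum>x\<in>C. \<Sum>y\<in>Y. (if restrict x J = restrict y J then 1 else 0) * w)"
      by (rule sum.swap)
    also have "\<dots> = (\<Sum>x\<in>C. (if (\<forall>i\<in>Q\<inter>J. x i = c i) then u else 0) / real (card C))"
    proof (rule sum.cong[OF refl])
      fix x assume xC: "x \<in> C"
      have s1: "(\<Sum>y\<in>Y. (if restrict x J = restrict y J then 1 else 0) * w)
          = real (card {y\<in>Y. restrict x J = restrict y J}) * w"
        using card_filter_sum[OF fY, of "\<lambda>y. restrict x J = restrict y J"]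
        by (simp add: sum_distrib_right)
      have s2: "{y\<in>Y. restrict x J = restrict y J}
          = {y \<in> cube n. restrict y Q = restrict z Q \<and> restrict y J = restrict x J}"
        using z by (auto simp: Y_def)
      have s3: "card {y \<in> cube n. restrict y Q = restrict z Q \<and> restrict y J = restrict x J}
          = (if \<forall>i\<in>Q\<inter>J. x i = z i then 2 ^ card R else 0)"
        unfolding R_def by (rule count_lemma) (use xC Csub z assms(3,5) in auto)
      have s4: "(\<forall>i\<in>Q\<inter>J. x i = z i) \<longleftrightarrow> (\<forall>i\<in>Q\<inter>J. x i = c i)" using z by auto
      have s5: "(2::real) ^ card R * w = u / real (card C)"
        by (simp add: w_def u_def mRk power_add power_one_over)
      show "(\<Sum>y\<in>Y. (if restrict x J = restrict y J then 1 else 0) * w)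
          = (if (\<forall>i\<in>Q\<inter>J. x i = c i) then u else 0) / real (card C)"
        unfolding s1 s2 s3 s4 using s5 by simp
    qed
    finally show ?thesis by (simp add: sum_divide_distrib)
  qed
  have finAQ: "finite AQ" using finite_subset[OF assms(5)] by (simp add: AQ_def finite_PiE)
  have diff: "\<bar>marg n (U_dist C) Q c - marg n (UJ_dist n J C) Q c\<bar>
      \<le> (\<Sum>b\<in>B. real (cb b) * (if (\<forall>i\<in>Q\<inter>J. b i = c i) then \<bar>pb b (restrict c K) - u\<bar> else 0))
         / real (card C)" if cAQ: "c \<in> AQ" for c
  proof -
    define f where "f x = (if restrict x Q = c then 1 else 0) - (if (\<forall>i\<in>Q\<inter>J. x i = c i) then u else 0)" for x
    have cext: "c \<in> extensional Q" using cAQ by (simp add: AQ_def PiE_iff)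
    have d: "marg n (U_dist C) Q c - marg n (UJ_dist n J C) Q c = (\<Sum>x\<in>C. f x) / real (card C)"
      by (simp add: Pc P'c cAQ f_def sum_subtractf diff_divide_distrib)
    have grp: "(\<Sum>x\<in>C. f x) = (\<Sum>b\<in>B. \<Sum>x\<in>{x. x\<in>C \<and> restrict x J = b}. f x)"
      by (rule sum.group[symmetric]) (auto simp: B_def finC finB)
    have inner: "(\<Sum>x\<in>{x. x\<in>C \<and> restrict x J = b}. f x)
        = (if \<forall>i\<in>Q\<inter>J. b i = c i then real (cb b) * (pb b (restrict c K) - u) else 0)"
      if bB: "b \<in> B" for b
    proof -
      have fx: "f x = (if \<forall>i\<in>Q\<inter>J. b i = c i then (if restrict x K = restrict c K then 1 else 0) - u else 0)"
        if x: "x \<in> C" "restrict x J = b" for x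
      proof -
        have bi: "\<forall>i\<in>J. b i = x i" using x(2) by auto
        have e1: "restrict x Q = c \<longleftrightarrow> (\<forall>i\<in>Q\<inter>J. b i = c i) \<and> restrict x K = restrict c K"
          unfolding restrict_eq_ext[OF cext] restrict_eq_iff K_def using bi by auto
        have e2: "(\<forall>i\<in>Q\<inter>J. x i = c i) \<longleftrightarrow> (\<forall>i\<in>Q\<inter>J. b i = c i)" using bi by auto
        show ?thesis unfolding f_def e1 e2 by auto
      qed
      have "(\<Sum>x\<in>{x. x\<in>C \<and> restrict x J = b}. f x)
        = (\<Sum>x\<in>{x. x\<in>C \<and> restrict x J = b}.
             (if \<forall>i\<in>Q\<inter>J. b i = c i then (if restrict x K = restrict c K then 1 else 0) - u else 0))"
        by (rule sum.cong[OF refl]) (use fx in auto)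
      also have "\<dots> = (if \<forall>i\<in>Q\<inter>J. b i = c i then real (cb b) * (pb b (restrict c K) - u) else 0)"
      proof (cases "\<forall>i\<in>Q\<inter>J. b i = c i")
        case True
        have fCb: "finite {x. x\<in>C \<and> restrict x J = b}" using finC by simp
        have "(\<Sum>x\<in>{x. x\<in>C \<and> restrict x J = b}. (if restrict x K = restrict c K then 1 else 0) - u)
            = real (card {x\<in>{x. x\<in>C \<and> restrict x J = b}. restrict x K = restrict c K}) - real (cb b) * u"
          using card_filter_sum[OF fCb, of "\<lambda>x. restrict x K = restrict c K"]
          by (simp add: sum_subtractf cb_def)
        also have "{x\<in>{x. x\<in>C \<and> restrict x J = b}. restrict x K = restrict c K}
            = {x\<in>C. restrict x J = b \<and> restrict x K = restrict c K}" by auto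
        also have "real (card \<dots>) = real (cb b) * pb b (restrict c K)"
          using cbpos[OF bB] by (simp add: pb_def cnt_def)
        finally have F: "(\<Sum>x\<in>{x. x\<in>C \<and> restrict x J = b}. (if restrict x K = restrict c K then 1 else 0) - u)
            = real (cb b) * pb b (restrict c K) - real (cb b) * u" .
        show ?thesis unfolding if_P[OF True] F by (simp add: right_diff_distrib)
      next
        case False
        show ?thesis unfolding if_not_P[OF False] by simp
      qed
      finally show ?thesis .
    qed
    have "\<bar>\<Sum>x\<in>C. f x\<bar> \<le> (\<Sum>b\<in>B. \<bar>\<Sum>x\<in>{x. x\<in>C \<and> restrict x J = b}. f x\<bar>)"
      unfolding grp by (rule sum_abs)
    also have "\<dots> = (\<Sum>b\<in>B. real (cb b) * (if (\<forall>i\<in>Q\<inter>J. b i = c i) then \<bar>pb b (restrict c K) - u\<bar> else 0))"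
      by (rule sum.cong[OF refl]) (simp add: inner abs_mult)
    finally show ?thesis unfolding d using cardC by (simp add: abs_divide divide_right_mono)
  qed
  have inner2: "(\<Sum>c\<in>AQ. if (\<forall>i\<in>Q\<inter>J. b i = c i) then \<bar>pb b (restrict c K) - u\<bar> else 0) \<le> s b" for b
  proof -
    define D where "D = {c\<in>AQ. \<forall>i\<in>Q\<inter>J. b i = c i}"
    have "(\<Sum>c\<in>AQ. if (\<forall>i\<in>Q\<inter>J. b i = c i) then \<bar>pb b (restrict c K) - u\<bar> else 0)
        = (\<Sum>c\<in>D. \<bar>pb b (restrict c K) - u\<bar>)"
      unfolding D_def by (rule sum.inter_filter[OF finAQ, symmetric])
    also have "inj_on (\<lambda>c. restrict c K) D"
    proof (rule inj_onI)
      fix c c' assume cD: "c \<in> D" "c' \<in> D" and r: "restrict c K = restrict c' K"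
      show "c = c'"
      proof (rule PiE_ext[of c Q "\<lambda>_. UNIV" c'])
        show "c \<in> Q \<rightarrow>\<^sub>E UNIV" "c' \<in> Q \<rightarrow>\<^sub>E UNIV" using cD by (auto simp: D_def AQ_def)
      next
        fix i assume "i \<in> Q"
        then show "c i = c' i" using cD r unfolding D_def K_def restrict_eq_iff by auto
      qed
    qed
    then have "(\<Sum>c\<in>D. \<bar>pb b (restrict c K) - u\<bar>) = (\<Sum>a\<in>(\<lambda>c. restrict c K) ` D. \<bar>pb b a - u\<bar>)"
      by (simp add: sum.reindex)
    also have "\<dots> \<le> (\<Sum>a\<in>AK. \<bar>pb b a - u\<bar>)"
      by (rule sum_mono2[OF finAK]) (auto simp: AK_def)
    finally show ?thesis by (simp add: s_def)
  qed
  have tv: "(\<Sum>b\<in>B. (real (cb b) / real (card C)) * s b) \<ge> 1/4"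
  proof -
    have "1/8 \<le> (1/2) * (\<Sum>c\<in>AQ. \<bar>marg n (U_dist C) Q c - marg n (UJ_dist n J C) Q c\<bar>)"
      using assms(6) by (simp add: d_TV_def imgAQ)
    also have "(\<Sum>c\<in>AQ. \<bar>marg n (U_dist C) Q c - marg n (UJ_dist n J C) Q c\<bar>)
        \<le> (\<Sum>c\<in>AQ. (\<Sum>b\<in>B. real (cb b) * (if (\<forall>i\<in>Q\<inter>J. b i = c i) then \<bar>pb b (restrict c K) - u\<bar> else 0))
         / real (card C))"
      by (rule sum_mono) (rule diff)
    also have "\<dots> = (\<Sum>b\<in>B. real (cb b) * (\<Sum>c\<in>AQ. (if (\<forall>i\<in>Q\<inter>J. b i = c i) then \<bar>pb b (restrict c K) - u\<bar> else 0)))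
         / real (card C)"
      unfolding sum_divide_distrib[symmetric] sum_distrib_left by (rule arg_cong[where f="\<lambda>t. t / real (card C)"], rule sum.swap)
    also have "\<dots> \<le> (\<Sum>b\<in>B. real (cb b) * s b) / real (card C)"
    proof (rule divide_right_mono)
      show "(\<Sum>b\<in>B. real (cb b) * (\<Sum>c\<in>AQ. (if (\<forall>i\<in>Q\<inter>J. b i = c i) then \<bar>pb b (restrict c K) - u\<bar> else 0)))
          \<le> (\<Sum>b\<in>B. real (cb b) * s b)"
        by (rule sum_mono, rule mult_left_mono[OF inner2]) simp
    qed simp
    also have "\<dots> = (\<Sum>b\<in>B. (real (cb b) / real (card C)) * s b)"
      by (simp add: sum_divide_distrib)
    finally show ?thesis by simp
  qed
  have "cond_entropy_U C K J = (\<Sum>b\<in>B. (real (cb b) / real (card C)) * entropy2 T (pb b))"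
    unfolding cond_entropy_U_def B_def cb_def T_def pb_def cnt_def by simp
  also have "\<dots> \<le> (\<Sum>b\<in>B. (real (cb b) / real (card C)) * (real k - ((1/11) * s b - 1/90) / ln 2))"
    by (intro sum_mono mult_left_mono ent) auto
  also have "\<dots> = real k * ((\<Sum>b\<in>B. real (cb b)) / real (card C))
      - ((1/11) * (\<Sum>b\<in>B. (real (cb b) / real (card C)) * s b)
         - (1/90) * ((\<Sum>b\<in>B. real (cb b)) / real (card C))) / ln 2"
    by (simp add: sum_subtractf sum_distrib_left sum_divide_distrib algebra_simps diff_divide_distrib sum.distrib)
  also have "\<dots> = real k - ((1/11) * (\<Sum>b\<in>B. (real (cb b) / real (card C)) * s b) - 1/90) / ln 2"
    using sum_cb cardC by simp
  also have "\<dots> \<le> real k - 0.0005"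
  proof -
    have l2: "0 < ln (2::real)" "ln (2::real) < 1" using ln_2_less_1 by auto
    have "(1/11) * (\<Sum>b\<in>B. (real (cb b) / real (card C)) * s b) - 1/90 \<ge> 1/44 - 1/90"
      using tv by simp
    then have "((1/11) * (\<Sum>b\<in>B. (real (cb b) / real (card C)) * s b) - 1/90) / ln 2 \<ge> (1/44 - 1/90) / 1"
      using l2 by (intro frac_le) auto
    moreover have "(1/44 - 1/90) / 1 \<ge> (0.0005::real)" by simp
    ultimately show ?thesis by linarith
  qed
  finally show ?thesis by (simp add: K_def k_def)
qed

end
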